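(* Let $S\subseteq(0,1)$ be open, $f:S\to(0,1)$ differentiable, and consider a (possibly randomized) Bernoulli factory for $f$ that is fast. Then for every $p\in S$ the output $Y$ satisfies the sequential Cramér–Rao bound $$\operatorname{Var}[Y]\ \ge\ \frac{(f'(p))^2\,p(1-p)}{\mathbb E[N]}.$$
   Context: Let $X=(X_i)$ be i.i.d. Bernoulli with parameter $p\in S$ and $U=(U_i)$ i.i.d. uniform on $(0,1)$, independent of $X$. A (possibly randomized) Bernoulli factory for $f$ consists of measurable stopping functions $\tau_i(x_1,u_1;\dots;x_i,u_i)\in\{0,1\}$ and measurable output functions $\gamma_n(x_1,u_1;\dots;x_n,u_n)\in\{0,1\}$; $N=\min\{i:\tau_i(X_1,U_1;\dots;X_i,U_i)=1\}$ is assumed finite almost surely, and the output $Y=\gamma_N(X_1,U_1;\dots;X_N,U_N)$ satisfies $\Pr[Y=1]=f(p)$ for all $p\in S$. The factory is fast if for every $p\in S$ there exist $A>0$, $\beta<1$ with $\Pr[N>n]\le A\beta^n$ for all $n$. *)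

theory Defs
  imports "HOL-Probability.Probability"
begin

text \<open>Sample points: omega j = (X_(j+1), U_(j+1)), with X a Boolean coin (True = 1)
  and U a real number.\<close>

definition step_space :: "real \<Rightarrow> (bool \<times> real) measure" where
  "step_space p = measure_pmf (bernoulli_pmf p) \<Otimes>\<^sub>M uniform_measure lborel {0<..<1}"

definition seq_space :: "real \<Rightarrow> (nat \<Rightarrow> bool \<times> real) measure" where
  "seq_space p = (\<Pi>\<^sub>M j\<in>(UNIV::nat set). step_space p)"

definition event_space :: "(nat \<Rightarrow> bool \<times> real) measure" where
  "event_space = (\<Pi>\<^sub>M j\<in>(UNIV::nat set). (count_space UNIV \<Otimes>\<^sub>M borel))"

definition depends_on_first :: "nat \<Rightarrow> ((nat \<Rightarrow> bool \<times> real) \<Rightarrow> 'b) \<Rightarrow> bool" where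
  "depends_on_first i g \<longleftrightarrow> (\<forall>\<omega> \<omega>'. (\<forall>j<i. \<omega> j = \<omega>' j) \<longrightarrow> g \<omega> = g \<omega>')"

definition stop_time :: "(nat \<Rightarrow> (nat \<Rightarrow> bool \<times> real) \<Rightarrow> bool) \<Rightarrow> (nat \<Rightarrow> bool \<times> real) \<Rightarrow> nat" where
  "stop_time \<tau> \<omega> = (LEAST i. 0 < i \<and> \<tau> i \<omega>)"

definition factory_output ::
  "(nat \<Rightarrow> (nat \<Rightarrow> bool \<times> real) \<Rightarrow> bool) \<Rightarrow> (nat \<Rightarrow> (nat \<Rightarrow> bool \<times> real) \<Rightarrow> bool)
     \<Rightarrow> (nat \<Rightarrow> bool \<times> real) \<Rightarrow> bool" where
  "factory_output \<tau> \<gamma> \<omega> = \<gamma> (stop_time \<tau> \<omega>) \<omega>"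

definition bernoulli_factory ::
  "real set \<Rightarrow> (real \<Rightarrow> real) \<Rightarrow> (nat \<Rightarrow> (nat \<Rightarrow> bool \<times> real) \<Rightarrow> bool)
     \<Rightarrow> (nat \<Rightarrow> (nat \<Rightarrow> bool \<times> real) \<Rightarrow> bool) \<Rightarrow> bool" where
  "bernoulli_factory S f \<tau> \<gamma> \<longleftrightarrow>
     (\<forall>i. \<tau> i \<in> measurable event_space (count_space UNIV) \<and> depends_on_first i (\<tau> i)) \<and>
     (\<forall>n. \<gamma> n \<in> measurable event_space (count_space UNIV) \<and> depends_on_first n (\<gamma> n)) \<and>
     (\<forall>p\<in>S. (AE \<omega> in seq_space p. \<exists>i>0. \<tau> i \<omega>) \<and>
             measure (seq_space p) {\<omega> \<in> space (seq_space p). factory_output \<tau> \<gamma> \<omega>} = f p)"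

definition fast_factory ::
  "real set \<Rightarrow> (nat \<Rightarrow> (nat \<Rightarrow> bool \<times> real) \<Rightarrow> bool) \<Rightarrow> bool" where
  "fast_factory S \<tau> \<longleftrightarrow>
     (\<forall>p\<in>S. \<exists>A>0. \<exists>\<beta><1. \<forall>n.
        measure (seq_space p) {\<omega> \<in> space (seq_space p). stop_time \<tau> \<omega> > n} \<le> A * \<beta> ^ n)"

end

theory Submission
  imports Defs
begin

definition rr :: "real \<Rightarrow> real \<Rightarrow> bool \<times> real \<Rightarrow> real" where
  "rr p q z = (if fst z then q/p else (1-q)/(1-p))"

lemma unif_prob: "prob_space (uniform_measure lborel {0<..<(1::real)})"
  by (rule prob_space_uniform_measure) auto

lemma step_prob: "prob_space (step_space q)"
  unfolding step_space_def
  by (intro prob_space_pair unif_prob prob_space_measure_pmf)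

lemma sets_step: "sets (step_space q) = sets (count_space UNIV \<Otimes>\<^sub>M borel)"
  unfolding step_space_def
  by (intro sets_pair_measure_cong) auto

lemma space_step: "space (step_space q) = UNIV"
  using sets_eq_imp_space_eq[OF sets_step] by (simp add: space_pair_measure)

lemma sets_seq: "sets (seq_space q) = sets event_space"
  unfolding seq_space_def event_space_def
  by (intro sets_PiM_cong) (auto simp: sets_step)

lemma space_seq: "space (seq_space q) = UNIV"
  using sets_eq_imp_space_eq[OF sets_seq[of q]]
  by (simp add: event_space_def space_PiM space_pair_measure)

lemma seq_prob: "prob_space (seq_space q)"
  unfolding seq_space_def by (intro prob_space_PiM step_prob)

lemma fst_meas: "(\<lambda>z. h (fst z)) \<in> borel_measurable (step_space p)"
proof -
  have "h \<in> measure_pmf (bernoulli_pmf p) \<rightarrow>\<^sub>M borel"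
    by (simp add: measurable_cong_sets[OF sets_measure_pmf_count_space refl])
  then show ?thesis unfolding step_space_def by (rule measurable_compose[OF measurable_fst])
qed

lemma rr_meas: "(\<lambda>z. ennreal (rr p q z)) \<in> borel_measurable (step_space r)"
  using fst_meas[of "\<lambda>b. ennreal (if b then q/p else (1-q)/(1-p))"] by (simp add: rr_def)

lemma mprod_meas: fixes n :: nat shows "(\<lambda>y. \<Prod>j<n. ennreal (rr p q (y j))) \<in> borel_measurable (PiM {..<n} (\<lambda>_. step_space r))"
proof (intro borel_measurable_prod_ennreal)
  fix j assume "j \<in> {..<n}"
  then have "(\<lambda>y. y j) \<in> PiM {..<n} (\<lambda>_. step_space r) \<rightarrow>\<^sub>M step_space r"
    by (intro measurable_component_singleton) auto
  from measurable_compose[OF this rr_meas] show "(\<lambda>y. ennreal (rr p q (y j))) \<in> borel_measurable (PiM {..<n} (\<lambda>_. step_space r))" .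
qed

lemma rr_nonneg: "0 < p \<Longrightarrow> p < 1 \<Longrightarrow> 0 \<le> q \<Longrightarrow> q \<le> 1 \<Longrightarrow> 0 \<le> rr p q z"
  by (auto simp: rr_def)

lemma step_density:
  assumes p: "0 < p" "p < 1" and q: "0 \<le> q" "q \<le> 1" and A: "A \<in> sets (step_space p)"
  shows "emeasure (step_space q) A = (\<integral>\<^sup>+ z. ennreal (rr p q z) * indicator A z \<partial>step_space p)"
proof -
  interpret U: prob_space "uniform_measure lborel {0<..<(1::real)}" by (rule unif_prob)
  interpret PP: pair_sigma_finite "measure_pmf (bernoulli_pmf p)" "uniform_measure lborel {0<..<(1::real)}"
    by unfold_locales
  have A': "A \<in> sets (measure_pmf (bernoulli_pmf q) \<Otimes>\<^sub>M uniform_measure lborel {0<..<(1::real)})"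
    using A sets_step[of p] sets_step[of q] by (simp add: step_space_def)
  have A2: "A \<in> sets (measure_pmf (bernoulli_pmf p) \<Otimes>\<^sub>M uniform_measure lborel {0<..<(1::real)})"
    using A by (simp add: step_space_def)
  have "emeasure (step_space q) A = (\<integral>\<^sup>+x. emeasure (uniform_measure lborel {0<..<(1::real)}) (Pair x -` A) \<partial>measure_pmf (bernoulli_pmf q))"
    unfolding step_space_def by (rule U.emeasure_pair_measure_alt[OF A'])
  also have "\<dots> = emeasure (uniform_measure lborel {0<..<(1::real)}) (Pair True -` A) * q
       + emeasure (uniform_measure lborel {0<..<(1::real)}) (Pair False -` A) * (1 - q)"
    using q by simp
  finally have L: "emeasure (step_space q) A = emeasure (uniform_measure lborel {0<..<(1::real)}) (Pair True -` A) * q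
       + emeasure (uniform_measure lborel {0<..<(1::real)}) (Pair False -` A) * (1 - q)" .
  have "(\<integral>\<^sup>+ z. ennreal (rr p q z) * indicator A z \<partial>step_space p)
      = (\<integral>\<^sup>+ x. \<integral>\<^sup>+ u. ennreal (rr p q (x,u)) * indicator A (x,u) \<partial>uniform_measure lborel {0<..<(1::real)} \<partial>measure_pmf (bernoulli_pmf p))"
    unfolding step_space_def
    using U.nn_integral_fst[symmetric, of "\<lambda>z. ennreal (rr p q z) * indicator A z"] A2
    by (simp add: rr_def)
  also have "\<dots> = (\<integral>\<^sup>+ x. ennreal (rr p q (x,0)) * emeasure (uniform_measure lborel {0<..<(1::real)}) (Pair x -` A) \<partial>measure_pmf (bernoulli_pmf p))"
  proof (intro nn_integral_cong)
    fix x
    have "(\<integral>\<^sup>+ u. ennreal (rr p q (x,u)) * indicator A (x,u) \<partial>uniform_measure lborel {0<..<(1::real)})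
       = (\<integral>\<^sup>+ u. ennreal (rr p q (x,0)) * indicator (Pair x -` A) u \<partial>uniform_measure lborel {0<..<(1::real)})"
      by (intro nn_integral_cong) (auto simp: rr_def indicator_def)
    also have "\<dots> = ennreal (rr p q (x,0)) * emeasure (uniform_measure lborel {0<..<(1::real)}) (Pair x -` A)"
      by (rule nn_integral_cmult_indicator) (use sets_Pair1[OF A2, of x] in simp)
    finally show "(\<integral>\<^sup>+ u. ennreal (rr p q (x,u)) * indicator A (x,u) \<partial>uniform_measure lborel {0<..<(1::real)})
       = ennreal (rr p q (x,0)) * emeasure (uniform_measure lborel {0<..<(1::real)}) (Pair x -` A)" .
  qed
  also have "\<dots> = ennreal (rr p q (True,0)) * emeasure (uniform_measure lborel {0<..<(1::real)}) (Pair True -` A) * p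
       + ennreal (rr p q (False,0)) * emeasure (uniform_measure lborel {0<..<(1::real)}) (Pair False -` A) * (1 - p)"
    using p by simp
  also have "\<dots> = emeasure (uniform_measure lborel {0<..<(1::real)}) (Pair True -` A) * q
       + emeasure (uniform_measure lborel {0<..<(1::real)}) (Pair False -` A) * (1 - q)"
  proof -
    have e1: "ennreal p * ennreal (q/p) = ennreal q" using p q by (simp add: ennreal_mult[symmetric])
    have e2: "ennreal (1-p) * ennreal ((1-q)/(1-p)) = ennreal (1-q)" using p q by (simp add: ennreal_mult[symmetric])
    have m1: "ennreal (q/p) * X * ennreal p = X * ennreal q" for X by (metis e1 mult.commute mult.assoc)
    have m2: "ennreal ((1-q)/(1-p)) * X * ennreal (1-p) = X * ennreal (1-q)" for X by (metis e2 mult.commute mult.assoc)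
    show ?thesis unfolding rr_def fst_conv if_True if_False m1 m2 ..
  qed
  finally show ?thesis using L by simp
qed
lemma indicator_PiE_prod:
  fixes A :: "nat \<Rightarrow> 'a set"
  assumes "y \<in> extensional {..<n}"
  shows "(indicator (Pi\<^sub>E {..<n} A) y :: ennreal) = (\<Prod>j<n. indicator (A j) (y j))"
proof (cases "\<forall>j<n. y j \<in> A j")
  case True
  then have "y \<in> Pi\<^sub>E {..<n} A" using assms by (auto simp: PiE_iff)
  then show ?thesis using True by simp
next
  case False
  then obtain j where j: "j < n" "y j \<notin> A j" by auto
  then have "y \<notin> Pi\<^sub>E {..<n} A" by (auto simp: PiE_iff)
  moreover have "(\<Prod>j<n. (indicator (A j) (y j) :: ennreal)) = 0"
    by (rule prod_zero) (use j in \<open>auto intro!: bexI[of _ j] simp: indicator_def\<close>)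
  ultimately show ?thesis by simp
qed

lemma fin_density:
  fixes n :: nat
  assumes p: "0 < p" "p < 1" and q: "0 \<le> q" "q \<le> 1"
  shows "density (PiM {..<n} (\<lambda>_. step_space p)) (\<lambda>y. \<Prod>j<n. ennreal (rr p q (y j)))
         = PiM {..<n} (\<lambda>_. step_space q)"
proof -
  interpret Q: product_prob_space "\<lambda>_::nat. step_space q" "UNIV::nat set"
    unfolding product_prob_space_def product_prob_space_axioms_def product_sigma_finite_def
    using step_prob by (auto intro: prob_space_imp_sigma_finite)
  interpret P: product_prob_space "\<lambda>_::nat. step_space p" "UNIV::nat set"
    unfolding product_prob_space_def product_prob_space_axioms_def product_sigma_finite_def
    using step_prob by (auto intro: prob_space_imp_sigma_finite)
  note mprod = mprod_meas[where r=p]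
  show ?thesis
  proof (rule Q.PiM_eqI)
    show "finite {..<n}" by simp
    show "sets (density (PiM {..<n} (\<lambda>_. step_space p)) (\<lambda>y. \<Prod>j<n. ennreal (rr p q (y j))))
        = sets (PiM {..<n} (\<lambda>_. step_space q))"
      unfolding sets_density by (intro sets_PiM_cong) (auto simp: sets_step)
    fix A assume A: "\<And>i. i \<in> {..<n} \<Longrightarrow> A i \<in> sets (step_space q)"
    have A': "A i \<in> sets (step_space p)" if "i \<in> {..<n}" for i using A[OF that] by (simp add: sets_step)
    have "emeasure (density (PiM {..<n} (\<lambda>_. step_space p)) (\<lambda>y. \<Prod>j<n. ennreal (rr p q (y j)))) (Pi\<^sub>E {..<n} A)
       = (\<integral>\<^sup>+ y. (\<Prod>j<n. ennreal (rr p q (y j))) * indicator (Pi\<^sub>E {..<n} A) y \<partial>PiM {..<n} (\<lambda>_. step_space p))"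
      by (rule emeasure_density[OF mprod]) (rule sets_PiM_I_finite, auto simp: A')
    also have "\<dots> = (\<integral>\<^sup>+ y. (\<Prod>j<n. ennreal (rr p q (y j)) * indicator (A j) (y j)) \<partial>PiM {..<n} (\<lambda>_. step_space p))"
    proof (intro nn_integral_cong)
      fix y assume "y \<in> space (PiM {..<n} (\<lambda>_. step_space p))"
      then have "y \<in> extensional {..<n}" by (simp add: space_PiM PiE_iff)
      then show "(\<Prod>j<n. ennreal (rr p q (y j))) * indicator (Pi\<^sub>E {..<n} A) y
          = (\<Prod>j<n. ennreal (rr p q (y j)) * indicator (A j) (y j))"
        by (simp only: indicator_PiE_prod prod.distrib)
    qed
    also have "\<dots> = (\<Prod>j<n. \<integral>\<^sup>+ z. ennreal (rr p q z) * indicator (A j) z \<partial>step_space p)"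
      by (rule P.product_nn_integral_prod) (use A' in \<open>auto intro!: borel_measurable_times_ennreal rr_meas borel_measurable_indicator\<close>)
    also have "\<dots> = (\<Prod>j<n. emeasure (step_space q) (A j))"
      by (intro prod.cong refl step_density[symmetric] p q A') auto
    finally show "emeasure (density (PiM {..<n} (\<lambda>_. step_space p)) (\<lambda>y. \<Prod>j<n. ennreal (rr p q (y j)))) (Pi\<^sub>E {..<n} A)
       = (\<Prod>j\<in>{..<n}. emeasure (step_space q) (A j))" .
  qed
qed

lemma depends_mono: "depends_on_first i g \<Longrightarrow> i \<le> n \<Longrightarrow> depends_on_first n g"
  unfolding depends_on_first_def by auto

lemma meas_ev: "g \<in> M \<rightarrow>\<^sub>M event_space \<longleftrightarrow> g \<in> M \<rightarrow>\<^sub>M seq_space q"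
  using measurable_cong_sets[OF refl sets_seq[of q, symmetric], of M] by simp

lemma meas_from_ev: "g \<in> event_space \<rightarrow>\<^sub>M N \<longleftrightarrow> g \<in> seq_space q \<rightarrow>\<^sub>M N"
  using measurable_cong_sets[OF sets_seq[of q, symmetric] refl, of N] by simp

lemma change_measure:
  assumes p: "0 < p" "p < 1" and q: "0 \<le> q" "q \<le> 1"
    and gm: "g \<in> borel_measurable event_space" and gd: "depends_on_first n g"
  shows "(\<integral>\<^sup>+\<omega>. g \<omega> \<partial>seq_space q) = (\<integral>\<^sup>+\<omega>. ennreal (\<Prod>j<n. rr p q (\<omega> j)) * g \<omega> \<partial>seq_space p)"
proof -
  interpret Q: product_prob_space "\<lambda>_::nat. step_space q" "UNIV::nat set"
    unfolding product_prob_space_def product_prob_space_axioms_def product_sigma_finite_def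
    using step_prob by (auto intro: prob_space_imp_sigma_finite)
  interpret P: product_prob_space "\<lambda>_::nat. step_space p" "UNIV::nat set"
    unfolding product_prob_space_def product_prob_space_axioms_def product_sigma_finite_def
    using step_prob by (auto intro: prob_space_imp_sigma_finite)
  define ext where "ext y = (\<lambda>j. if j < n then y j else (True, 0::real))" for y :: "nat \<Rightarrow> bool \<times> real"
  have ext_m: "ext \<in> measurable (PiM {..<n} (\<lambda>_. step_space r)) event_space" for r
    unfolding event_space_def ext_def
  proof (rule measurable_PiM_single')
    fix i :: nat
    show "(\<lambda>y. if i < n then y i else (True, 0::real)) \<in> PiM {..<n} (\<lambda>_. step_space r) \<rightarrow>\<^sub>M count_space UNIV \<Otimes>\<^sub>M borel"
    proof (cases "i < n")
      case True
      have "(\<lambda>y. y i) \<in> PiM {..<n} (\<lambda>_. step_space r) \<rightarrow>\<^sub>M step_space r"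
        using True by (intro measurable_component_singleton) auto
      from this[unfolded measurable_cong_sets[OF refl sets_step[of r]]] True show ?thesis by simp
    qed simp
  qed (auto simp: space_pair_measure)
  have gext: "g \<omega> = g (ext (restrict \<omega> {..<n}))" for \<omega>
  proof -
    have "\<forall>j<n. \<omega> j = ext (restrict \<omega> {..<n}) j" by (simp add: ext_def)
    then show ?thesis using gd unfolding depends_on_first_def by blast
  qed
  have gm': "(\<lambda>y. g (ext y)) \<in> borel_measurable (PiM {..<n} (\<lambda>_. step_space r))" for r
    using measurable_comp[OF ext_m gm] by (simp add: comp_def)
  have rm: "(\<lambda>\<omega>. restrict \<omega> {..<n}) \<in> seq_space r \<rightarrow>\<^sub>M PiM {..<n} (\<lambda>_. step_space r)" for r
    unfolding seq_space_def by (rule measurable_restrict_subset) auto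
  have "(\<integral>\<^sup>+\<omega>. g \<omega> \<partial>seq_space q) = (\<integral>\<^sup>+\<omega>. g (ext (restrict \<omega> {..<n})) \<partial>seq_space q)"
    by (simp only: gext[symmetric])
  also have "\<dots> = (\<integral>\<^sup>+y. g (ext y) \<partial>distr (seq_space q) (PiM {..<n} (\<lambda>_. step_space q)) (\<lambda>\<omega>. restrict \<omega> {..<n}))"
    by (rule nn_integral_distr[symmetric, OF rm]) (simp only: measurable_distr_eq1 gm')
  also have "distr (seq_space q) (PiM {..<n} (\<lambda>_. step_space q)) (\<lambda>\<omega>. restrict \<omega> {..<n}) = PiM {..<n} (\<lambda>_. step_space q)"
    unfolding seq_space_def by (rule Q.distr_PiM_restrict_finite) auto
  also have "\<dots> = density (PiM {..<n} (\<lambda>_. step_space p)) (\<lambda>y. \<Prod>j<n. ennreal (rr p q (y j)))"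
    by (rule fin_density[symmetric, OF p q])
  also have "(\<integral>\<^sup>+y. g (ext y) \<partial>\<dots>) = (\<integral>\<^sup>+y. (\<Prod>j<n. ennreal (rr p q (y j))) * g (ext y) \<partial>PiM {..<n} (\<lambda>_. step_space p))"
    by (rule nn_integral_density) (intro mprod_meas gm')+
  also have "PiM {..<n} (\<lambda>_. step_space p) = distr (seq_space p) (PiM {..<n} (\<lambda>_. step_space p)) (\<lambda>\<omega>. restrict \<omega> {..<n})"
    unfolding seq_space_def by (rule P.distr_PiM_restrict_finite[symmetric]) auto
  also have "(\<integral>\<^sup>+y. (\<Prod>j<n. ennreal (rr p q (y j))) * g (ext y) \<partial>\<dots>)
      = (\<integral>\<^sup>+\<omega>. (\<Prod>j<n. ennreal (rr p q (restrict \<omega> {..<n} j))) * g (ext (restrict \<omega> {..<n})) \<partial>seq_space p)"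
    by (rule nn_integral_distr[OF rm]) (simp only: measurable_distr_eq1, intro borel_measurable_times_ennreal mprod_meas gm')
  also have "\<dots> = (\<integral>\<^sup>+\<omega>. ennreal (\<Prod>j<n. rr p q (\<omega> j)) * g \<omega> \<partial>seq_space p)"
  proof (intro nn_integral_cong)
    fix \<omega> :: "nat \<Rightarrow> bool \<times> real"
    have "(\<Prod>j<n. ennreal (rr p q (restrict \<omega> {..<n} j))) = (\<Prod>j<n. ennreal (rr p q (\<omega> j)))"
      by (intro prod.cong) auto
    also have "\<dots> = ennreal (\<Prod>j<n. rr p q (\<omega> j))"
      by (rule prod_ennreal) (use p q in \<open>auto intro: rr_nonneg\<close>)
    finally show "(\<Prod>j<n. ennreal (rr p q (restrict \<omega> {..<n} j))) * g (ext (restrict \<omega> {..<n}))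
        = ennreal (\<Prod>j<n. rr p q (\<omega> j)) * g \<omega>" using gext[of \<omega>] by simp
  qed
  finally show ?thesis .
qed

lemma space_ev: "space event_space = UNIV"
  by (simp add: event_space_def space_PiM space_pair_measure)

lemma comp_fst_meas: "(\<lambda>\<omega>. h (fst (\<omega> j))) \<in> event_space \<rightarrow>\<^sub>M count_space UNIV"
proof -
  have "(\<lambda>\<omega>. \<omega> j) \<in> event_space \<rightarrow>\<^sub>M count_space UNIV \<Otimes>\<^sub>M borel"
    unfolding event_space_def by (rule measurable_component_singleton) auto
  then have "(\<lambda>\<omega>. fst (\<omega> j)) \<in> event_space \<rightarrow>\<^sub>M count_space UNIV"
    by (rule measurable_compose[OF _ measurable_fst])
  then show ?thesis by (rule measurable_compose) simp
qed

lemma rr_ev_meas: "(\<lambda>\<omega>. rr p q (\<omega> j)) \<in> borel_measurable event_space"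
proof -
  have "(\<lambda>\<omega>. \<omega> j) \<in> event_space \<rightarrow>\<^sub>M count_space UNIV \<Otimes>\<^sub>M borel"
    unfolding event_space_def by (rule measurable_component_singleton) auto
  then have "(\<lambda>\<omega>. fst (\<omega> j)) \<in> event_space \<rightarrow>\<^sub>M count_space UNIV"
    by (rule measurable_compose[OF _ measurable_fst])
  then show ?thesis unfolding rr_def by (rule measurable_compose) simp
qed

lemma prodrr_meas: "(\<lambda>\<omega>. \<Prod>j<n. rr p q (\<omega> j)) \<in> borel_measurable event_space"
  by (intro borel_measurable_prod rr_ev_meas)


lemma amgm:
  fixes x y c :: real
  assumes c: "0 < c"
  shows "2 * (x * y) \<le> c * x^2 + y^2 / c"
proof -
  have "0 \<le> (c*x - y)^2 / c" using c by simp
  also have "(c*x - y)^2 / c = c * x^2 - 2 * (x * y) + y^2 / c"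
    using c by (simp add: field_simps power2_eq_square)
  finally show ?thesis by simp
qed

lemma sq_rr:
  fixes p q :: real
  assumes p: "0 < p" "p < 1"
  defines "\<delta> \<equiv> (q - p)^2 / (p * (1 - p))"
  defines "q' \<equiv> q^2 / (p * (1 + \<delta>))"
  shows "(rr p q z)^2 = (1 + \<delta>) * rr p q' z"
proof -
  have d0: "0 \<le> \<delta>" using p by (simp add: \<delta>_def)
  have pd: "p * (1 + \<delta>) = (p*(1-p) + (q-p)^2) / (1 - p)"
    using p by (simp add: \<delta>_def field_simps)
  have pd0: "0 < p*(1-p) + (q-p)^2" using p by (simp add: add_pos_nonneg)
  have q'1: "q' = q^2 * (1-p) / (p*(1-p) + (q-p)^2)" unfolding q'_def pd using p pd0 by simp
  have "1 - q' = (p*(1-p) + (q-p)^2 - q^2*(1-p)) / (p*(1-p) + (q-p)^2)"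
    unfolding q'1 using pd0 by (simp add: field_simps)
  also have "p*(1-p) + (q-p)^2 - q^2*(1-p) = p * (1-q)^2" by (simp add: power2_eq_square algebra_simps)
  finally have q'2: "1 - q' = p * (1-q)^2 / (p*(1-p) + (q-p)^2)" .
  show ?thesis
  proof (cases "fst z")
    case True
    have d1: "1 + \<delta> \<noteq> 0" using d0 by simp
    have "(1 + \<delta>) * (q' / p) = (q/p)^2" unfolding q'_def using p d1 by (simp add: divide_simps power2_eq_square)
    then show ?thesis using True unfolding rr_def by simp
  next
    case False
    have dd: "1 + \<delta> = (p*(1-p) + (q-p)^2)/(p*(1-p))"
      unfolding \<delta>_def using p by (simp add: divide_simps)
    have "(1 + \<delta>) * ((1 - q') / (1 - p)) = ((1-q)/(1-p))^2"
      unfolding q'2 dd using p pd0 by (simp add: divide_simps power2_eq_square)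
    then show ?thesis using False unfolding rr_def by simp
  qed
qed

lemma geom_int:
  fixes N :: "'a \<Rightarrow> nat"
  assumes M: "prob_space M" and Nm: "N \<in> M \<rightarrow>\<^sub>M count_space UNIV"
    and tail: "\<And>n. measure M {\<omega>\<in>space M. n < N \<omega>} \<le> A * \<beta>^n" and A: "0 < A"
    and b: "\<beta> \<le> b" "0 < b" "0 \<le> \<beta>" and th: "0 \<le> \<theta>" "\<theta> * b < 1"
  shows "integrable M (\<lambda>\<omega>. \<theta> ^ N \<omega>)"
proof -
  interpret prob_space M by fact
  define C where "C = max 1 (A/b)"
  have mN: "{\<omega>\<in>space M. N \<omega> = n} \<in> sets M" for n using Nm by measurable
  have em: "measure M {\<omega>\<in>space M. N \<omega> = n} \<le> C * b^n" for n
  proof (cases n)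
    case 0
    have "measure M {\<omega>\<in>space M. N \<omega> = n} \<le> 1" by (rule prob_le_1)
    also have "1 \<le> C * b^n" using 0 by (simp add: C_def)
    finally show ?thesis .
  next
    case (Suc m)
    have "measure M {\<omega>\<in>space M. N \<omega> = n} \<le> measure M {\<omega>\<in>space M. m < N \<omega>}"
      by (rule finite_measure_mono) (use Suc Nm in \<open>auto, measurable\<close>)
    also have "\<dots> \<le> A * \<beta>^m" by (rule tail)
    also have "\<dots> \<le> A * b^m" using A b by (intro mult_left_mono power_mono) auto
    also have "\<dots> = (A/b) * b^n" using b Suc by simp
    also have "\<dots> \<le> C * b^n" using b by (intro mult_right_mono) (auto simp: C_def)
    finally show ?thesis .
  qed
  have pw: "ennreal (\<theta> ^ N \<omega>) = (\<Sum>n. ennreal (\<theta>^n) * indicator {\<omega>\<in>space M. N \<omega> = n} \<omega>)" if "\<omega> \<in> space M" for \<omega>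
  proof -
    have "(\<lambda>n. ennreal (\<theta>^n) * indicator {\<omega>\<in>space M. N \<omega> = n} \<omega>) = (\<lambda>n. if n = N \<omega> then ennreal (\<theta> ^ N \<omega>) else 0)"
      using that by (auto simp: indicator_def)
    moreover have "(\<lambda>n. if n = N \<omega> then ennreal (\<theta> ^ N \<omega>) else 0) sums ennreal (\<theta> ^ N \<omega>)"
      using sums_single[of "N \<omega>" "\<lambda>_. ennreal (\<theta> ^ N \<omega>)"] by simp
    ultimately show ?thesis by (simp add: sums_iff)
  qed
  have sg: "summable (\<lambda>n. C * (\<theta>*b)^n)"
    using th b by (intro summable_mult summable_geometric) auto
  have "(\<integral>\<^sup>+\<omega>. ennreal (\<theta> ^ N \<omega>) \<partial>M) = (\<integral>\<^sup>+\<omega>. (\<Sum>n. ennreal (\<theta>^n) * indicator {\<omega>\<in>space M. N \<omega> = n} \<omega>) \<partial>M)"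
    by (rule nn_integral_cong) (rule pw)
  also have "\<dots> = (\<Sum>n. \<integral>\<^sup>+\<omega>. ennreal (\<theta>^n) * indicator {\<omega>\<in>space M. N \<omega> = n} \<omega> \<partial>M)"
    by (rule nn_integral_suminf) (use mN in auto)
  also have "\<dots> = (\<Sum>n. ennreal (\<theta>^n) * emeasure M {\<omega>\<in>space M. N \<omega> = n})"
    by (intro suminf_cong nn_integral_cmult_indicator mN)
  also have "\<dots> \<le> (\<Sum>n. ennreal (C * (\<theta>*b)^n))"
  proof (intro suminf_le allI)
    fix n
    have "ennreal (\<theta>^n) * emeasure M {\<omega>\<in>space M. N \<omega> = n} = ennreal (\<theta>^n * measure M {\<omega>\<in>space M. N \<omega> = n})"
      using th by (simp add: emeasure_eq_measure ennreal_mult)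
    also have "\<dots> \<le> ennreal (C * (\<theta>*b)^n)"
    proof (rule ennreal_leI)
      have "\<theta>^n * measure M {\<omega>\<in>space M. N \<omega> = n} \<le> \<theta>^n * (C * b^n)"
        using th em[of n] by (intro mult_left_mono) auto
      also have "\<dots> = C * (\<theta>*b)^n" by (simp add: power_mult_distrib)
      finally show "\<theta>^n * measure M {\<omega>\<in>space M. N \<omega> = n} \<le> C * (\<theta>*b)^n" .
    qed
    finally show "ennreal (\<theta>^n) * emeasure M {\<omega>\<in>space M. N \<omega> = n} \<le> ennreal (C * (\<theta>*b)^n)" .
  qed auto
  also have "\<dots> = ennreal (\<Sum>n. C * (\<theta>*b)^n)"
    by (rule suminf_ennreal2[OF _ sg]) (use th b in \<open>auto simp: C_def\<close>)
  finally have fin: "(\<integral>\<^sup>+\<omega>. ennreal (\<theta> ^ N \<omega>) \<partial>M) < \<infinity>"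
    by (simp add: le_less_trans)
  have mt: "(\<lambda>\<omega>. \<theta> ^ N \<omega>) \<in> borel_measurable M"
    by (rule measurable_compose[OF Nm]) simp
  show ?thesis
    by (rule integrableI_bounded[OF mt]) (use fin th in simp)
qed


lemma phi_bound:
  fixes p q t \<delta> q' :: real and n :: nat and \<omega> :: "nat \<Rightarrow> bool \<times> real"
  assumes p: "0 < p" "p < 1" and q: "p \<le> q" "q \<le> 1" "q \<le> p * (1 + t)" and t: "0 < t" "t \<le> 1"
    and \<delta>_def: "\<delta> = (q - p)^2 / (p * (1 - p))" and q'_def: "q' = q^2 / (p * (1 + \<delta>))"
  shows "0 \<le> (\<Sum>i<n. (1+\<delta>)^i) * (\<Prod>j<n. rr p q' (\<omega> j))"
    and "(\<Sum>i<n. (1+\<delta>)^i) * (\<Prod>j<n. rr p q' (\<omega> j)) \<le> ((1+t)*(1+3*t))^n / t"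
proof -
  have sq: "(rr p q z)^2 = (1+\<delta>) * rr p q' z" for z
    unfolding q'_def \<delta>_def using sq_rr[OF p] by simp
  have d0: "0 \<le> \<delta>" using p by (simp add: \<delta>_def)
  have rq'0: "0 \<le> rr p q' z" for z
  proof -
    have "0 \<le> (1+\<delta>) * rr p q' z" using sq[of z, symmetric] by simp
    then show ?thesis using d0 by (simp add: zero_le_mult_iff)
  qed
  have P'0: "0 \<le> (\<Prod>j<n. rr p q' (\<omega> j))" by (intro prod_nonneg rq'0)
  have S0: "0 \<le> (\<Sum>i<n. (1+\<delta>)^i)" using d0 by (intro sum_nonneg) simp
  show "0 \<le> (\<Sum>i<n. (1+\<delta>)^i) * (\<Prod>j<n. rr p q' (\<omega> j))" using P'0 S0 by simp
  have key: "(1+\<delta>)^n * (\<Prod>j<n. rr p q' (\<omega> j)) = (\<Prod>j<n. rr p q (\<omega> j))^2"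
    by (simp add: prod_power_distrib sq prod.distrib)
  have rqb: "0 \<le> rr p q z \<and> rr p q z \<le> q/p" for z
  proof -
    have a1: "(1-q)/(1-p) \<le> 1" using p q by (simp add: divide_le_eq_1)
    have a2: "1 \<le> q/p" using p q by (simp add: le_divide_eq_1)
    show ?thesis
    proof (cases "fst z")
      case True then show ?thesis using rr_nonneg[of p q z] p q by (simp add: rr_def)
    next
      case False
      have "rr p q z = (1-q)/(1-p)" using False by (simp add: rr_def)
      then show ?thesis using a1 a2 rr_nonneg[of p q z] p q by linarith
    qed
  qed
  have Pb: "(\<Prod>j<n. rr p q (\<omega> j)) \<le> (q/p)^n"
    using prod_mono[of "{..<n}" "\<lambda>j. rr p q (\<omega> j)" "\<lambda>_. q/p"] rqb by simp
  have P0: "0 \<le> (\<Prod>j<n. rr p q (\<omega> j))" using rqb by (intro prod_nonneg) auto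
  have qp: "q/p \<le> 1+t" using p q by (simp add: divide_le_eq mult.commute)
  have qp0: "0 \<le> q/p" using p q by simp
  have qp2: "(q/p)^2 \<le> 1+3*t"
  proof -
    have "(q/p)^2 \<le> (1+t)^2" using qp qp0 by (intro power_mono) auto
    also have "\<dots> \<le> 1+3*t" using t by (simp add: power2_eq_square algebra_simps mult_left_le)
    finally show ?thesis .
  qed
  have "(\<Prod>j<n. rr p q (\<omega> j))^2 \<le> ((q/p)^n)^2" using Pb P0 by (intro power_mono) auto
  also have "\<dots> = ((q/p)^2)^n" by (simp add: power_mult[symmetric] mult.commute)
  also have "\<dots> \<le> (1+3*t)^n" using qp2 by (intro power_mono) auto
  finally have L2: "(\<Prod>j<n. rr p q (\<omega> j))^2 \<le> (1+3*t)^n" .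
  have Sb: "(\<Sum>i<n. (1+\<delta>)^i) \<le> real n * (1+\<delta>)^n"
    using sum_bounded_above[of "{..<n}" "\<lambda>i. (1+\<delta>)^i" "(1+\<delta>)^n"] d0
    by (simp add: power_increasing)
  have "(\<Sum>i<n. (1+\<delta>)^i) * (\<Prod>j<n. rr p q' (\<omega> j)) \<le> (real n * (1+\<delta>)^n) * (\<Prod>j<n. rr p q' (\<omega> j))"
    using Sb P'0 by (intro mult_right_mono) auto
  also have "\<dots> = real n * (\<Prod>j<n. rr p q (\<omega> j))^2" using key by (simp add: mult.assoc)
  also have "\<dots> \<le> real n * (1+3*t)^n" using L2 by (intro mult_left_mono) auto
  also have "\<dots> \<le> ((1+t)^n / t) * (1+3*t)^n"
  proof (intro mult_right_mono)
    have "1 + real n * t \<le> (1+t)^n" using Bernoulli_inequality[of t n] t by simp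
    then show "real n \<le> (1+t)^n / t" using t by (simp add: le_divide_eq)
  qed (use t in simp)
  also have "\<dots> = ((1+t)*(1+3*t))^n / t" by (simp add: power_mult_distrib)
  finally show "(\<Sum>i<n. (1+\<delta>)^i) * (\<Prod>j<n. rr p q' (\<omega> j)) \<le> ((1+t)*(1+3*t))^n / t" .
qed

lemma final_alg:
  fixes F V I :: real
  assumes H: "\<And>a. 0 < a \<Longrightarrow> 2 * \<bar>F\<bar> \<le> a * V + I / a" and V: "0 \<le> V" and I: "0 < I"
  shows "F^2 \<le> I * V"
proof (cases "F = 0")
  case True then show ?thesis using V I by simp
next
  case False
  then have F: "0 < \<bar>F\<bar>" by simp
  show ?thesis
  proof (cases "V = 0")
    case True
    have "2 * \<bar>F\<bar> \<le> (I / \<bar>F\<bar>) * V + I / (I / \<bar>F\<bar>)" using H[of "I / \<bar>F\<bar>"] F I by simp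
    then have "2 * \<bar>F\<bar> \<le> \<bar>F\<bar>" using True F I by simp
    then show ?thesis using F by simp
  next
    case False
    then have V0: "0 < V" using V by simp
    have "2 * \<bar>F\<bar> \<le> (\<bar>F\<bar> / V) * V + I / (\<bar>F\<bar> / V)" using H[of "\<bar>F\<bar> / V"] F V0 by simp
    then have "\<bar>F\<bar> \<le> I * V / \<bar>F\<bar>" using V0 F by simp
    then have "\<bar>F\<bar> * \<bar>F\<bar> \<le> I * V" using F by (simp add: le_divide_eq)
    then show ?thesis by (simp add: power2_eq_square)
  qed
qed

context
  fixes \<tau> \<gamma> :: "nat \<Rightarrow> (nat \<Rightarrow> bool \<times> real) \<Rightarrow> bool"
  assumes tm: "\<And>i. \<tau> i \<in> event_space \<rightarrow>\<^sub>M count_space UNIV" and td: "\<And>i. depends_on_first i (\<tau> i)"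
    and gmm: "\<And>n. \<gamma> n \<in> event_space \<rightarrow>\<^sub>M count_space UNIV" and gdp: "\<And>n. depends_on_first n (\<gamma> n)"
begin

definition TT where "TT = {\<omega>. \<exists>i>0. \<tau> i \<omega>}"
definition EE where "EE n = {\<omega>. \<tau> n \<omega> \<and> (\<forall>i. 0 < i \<and> i < n \<longrightarrow> \<not> \<tau> i \<omega>)}"
definition lam where "lam p q \<omega> = (\<Prod>j<stop_time \<tau> \<omega>. rr p q (\<omega> j))"

lemma stop_pos: assumes "\<omega> \<in> TT" shows "0 < stop_time \<tau> \<omega>" "\<tau> (stop_time \<tau> \<omega>) \<omega>"
proof -
  have ex: "\<exists>i. 0 < i \<and> \<tau> i \<omega>" using assms by (auto simp: TT_def)
  show "0 < stop_time \<tau> \<omega>" "\<tau> (stop_time \<tau> \<omega>) \<omega>"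
    unfolding stop_time_def using LeastI_ex[OF ex] by auto
qed

lemma stop_E: assumes T: "\<omega> \<in> TT" and n: "0 < n" shows "\<omega> \<in> EE n \<longleftrightarrow> stop_time \<tau> \<omega> = n"
proof
  assume "\<omega> \<in> EE n"
  then have "0 < n \<and> \<tau> n \<omega>" "\<And>m. 0 < m \<and> \<tau> m \<omega> \<Longrightarrow> n \<le> m"
    using n by (auto simp: EE_def not_less[symmetric])
  then show "stop_time \<tau> \<omega> = n" unfolding stop_time_def by (intro Least_equality) auto
next
  assume s: "stop_time \<tau> \<omega> = n"
  have "\<not> (0 < i \<and> \<tau> i \<omega>)" if "i < stop_time \<tau> \<omega>" for i
    using not_less_Least[of i "\<lambda>i. 0 < i \<and> \<tau> i \<omega>"] that unfolding stop_time_def by blast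
  then show "\<omega> \<in> EE n" using stop_pos[OF T] s by (auto simp: EE_def)
qed

lemma EE_TT: "0 < n \<Longrightarrow> EE n \<subseteq> TT"
  by (auto simp: EE_def TT_def)

lemma stop_meas: "(\<lambda>\<omega>. stop_time \<tau> \<omega>) \<in> event_space \<rightarrow>\<^sub>M count_space UNIV"
  unfolding stop_time_def using tm by measurable

lemma EE_meas: "EE n \<in> sets event_space"
proof -
  have "EE n = {\<omega> \<in> space event_space. \<tau> n \<omega> \<and> (\<forall>i. 0 < i \<and> i < n \<longrightarrow> \<not> \<tau> i \<omega>)}"
    by (auto simp: EE_def space_ev)
  also have "\<dots> \<in> sets event_space" using tm by measurable
  finally show ?thesis .
qed

lemma TT_meas: "TT \<in> sets event_space"
proof -
  have "TT = {\<omega> \<in> space event_space. \<exists>i. 0 < i \<and> \<tau> i \<omega>}"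
    by (auto simp: TT_def space_ev)
  also have "\<dots> \<in> sets event_space" using tm by measurable
  finally show ?thesis .
qed

lemma lam_meas: "lam p q \<in> borel_measurable event_space"
proof -
  have "(\<lambda>\<omega>. (\<lambda>n \<omega>. \<Prod>j<n. rr p q (\<omega> j)) (stop_time \<tau> \<omega>) \<omega>) \<in> borel_measurable event_space"
    by (rule measurable_compose_countable'[where I=UNIV, OF prodrr_meas stop_meas]) simp
  then show ?thesis by (simp add: lam_def[abs_def])
qed

lemma Y_meas: "(\<lambda>\<omega>. factory_output \<tau> \<gamma> \<omega>) \<in> event_space \<rightarrow>\<^sub>M count_space UNIV"
  unfolding factory_output_def
  by (rule measurable_compose_countable'[where I=UNIV, OF gmm stop_meas]) simp

lemma split_TT:
  fixes h :: "_ \<Rightarrow> ennreal"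
  shows "indicator TT \<omega> * h \<omega> = (\<Sum>n. indicator (EE (Suc n)) \<omega> * h \<omega>)"
proof (cases "\<omega> \<in> TT")
  case True
  define m where "m = stop_time \<tau> \<omega>"
  have m0: "0 < m" using stop_pos[OF True] by (simp add: m_def)
  have "(\<lambda>n. indicator (EE (Suc n)) \<omega> * h \<omega>) = (\<lambda>n. if n = m - 1 then h \<omega> else 0)"
  proof
    fix n
    have "\<omega> \<in> EE (Suc n) \<longleftrightarrow> n = m - 1" using stop_E[OF True, of "Suc n"] m0 by (auto simp: m_def)
    then show "indicator (EE (Suc n)) \<omega> * h \<omega> = (if n = m - 1 then h \<omega> else 0)" by (simp add: indicator_def)
  qed
  moreover have "(\<lambda>n. if n = m - 1 then h \<omega> else 0) sums h \<omega>"
    using sums_single[of "m - 1" "\<lambda>_. h \<omega>"] by simp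
  ultimately show ?thesis using True by (simp add: sums_iff)
next
  case False
  then have "\<omega> \<notin> EE (Suc n)" for n using EE_TT[of "Suc n"] by auto
  then show ?thesis using False by simp
qed

lemma change_stop:
  assumes p: "0 < p" "p < 1" and q: "0 \<le> q" "q \<le> 1" and g: "g \<in> borel_measurable event_space"
    and gd: "\<And>n. 0 < n \<Longrightarrow> depends_on_first n (\<lambda>\<omega>. indicator (EE n) \<omega> * g \<omega>)"
  shows "(\<integral>\<^sup>+\<omega>. indicator TT \<omega> * g \<omega> \<partial>seq_space q) = (\<integral>\<^sup>+\<omega>. indicator TT \<omega> * (ennreal (lam p q \<omega>) * g \<omega>) \<partial>seq_space p)"
proof -
  have mi: "(\<lambda>\<omega>. indicator (EE n) \<omega> * g \<omega>) \<in> borel_measurable event_space" for n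
    by (intro borel_measurable_times_ennreal g borel_measurable_indicator EE_meas)
  have mi2: "(\<lambda>\<omega>. indicator (EE n) \<omega> * (ennreal (lam p q \<omega>) * g \<omega>)) \<in> borel_measurable event_space" for n
    by (intro borel_measurable_times_ennreal g borel_measurable_indicator EE_meas measurable_compose[OF lam_meas] measurable_ennreal)
  have "(\<integral>\<^sup>+\<omega>. indicator TT \<omega> * g \<omega> \<partial>seq_space q) = (\<integral>\<^sup>+\<omega>. (\<Sum>n. indicator (EE (Suc n)) \<omega> * g \<omega>) \<partial>seq_space q)"
    by (simp only: split_TT)
  also have "\<dots> = (\<Sum>n. \<integral>\<^sup>+\<omega>. indicator (EE (Suc n)) \<omega> * g \<omega> \<partial>seq_space q)"
    by (rule nn_integral_suminf) (use mi meas_from_ev in blast)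
  also have "\<dots> = (\<Sum>n. \<integral>\<^sup>+\<omega>. ennreal (\<Prod>j<Suc n. rr p q (\<omega> j)) * (indicator (EE (Suc n)) \<omega> * g \<omega>) \<partial>seq_space p)"
    by (intro suminf_cong change_measure[OF p q mi gd]) simp
  also have "\<dots> = (\<Sum>n. \<integral>\<^sup>+\<omega>. indicator (EE (Suc n)) \<omega> * (ennreal (lam p q \<omega>) * g \<omega>) \<partial>seq_space p)"
  proof (intro suminf_cong nn_integral_cong)
    fix n \<omega>
    show "ennreal (\<Prod>j<Suc n. rr p q (\<omega> j)) * (indicator (EE (Suc n)) \<omega> * g \<omega>) =
        indicator (EE (Suc n)) \<omega> * (ennreal (lam p q \<omega>) * g \<omega>)"
    proof (cases "\<omega> \<in> EE (Suc n)")
      case True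
      then have "\<omega> \<in> TT" using EE_TT[of "Suc n"] by auto
      then have "stop_time \<tau> \<omega> = Suc n" using stop_E True by blast
      then show ?thesis using True by (simp add: lam_def)
    qed simp
  qed
  also have "\<dots> = (\<integral>\<^sup>+\<omega>. (\<Sum>n. indicator (EE (Suc n)) \<omega> * (ennreal (lam p q \<omega>) * g \<omega>)) \<partial>seq_space p)"
    by (rule nn_integral_suminf[symmetric]) (use mi2 meas_from_ev in blast)
  also have "\<dots> = (\<integral>\<^sup>+\<omega>. indicator TT \<omega> * (ennreal (lam p q \<omega>) * g \<omega>) \<partial>seq_space p)"
    by (simp only: split_TT[where h="\<lambda>\<omega>. ennreal (lam p q \<omega>) * g \<omega>"])
  finally show ?thesis .
qed


lemma dep_EE: assumes "0 < n" shows "depends_on_first n (\<lambda>\<omega>. \<omega> \<in> EE n)"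
  unfolding depends_on_first_def
proof (intro allI impI)
  fix \<omega> \<omega>' :: "nat \<Rightarrow> bool \<times> real" assume eq: "\<forall>j<n. \<omega> j = \<omega>' j"
  have "\<tau> i \<omega> = \<tau> i \<omega>'" if "i \<le> n" for i
    using depends_mono[OF td that] eq unfolding depends_on_first_def by blast
  then show "(\<omega> \<in> EE n) = (\<omega>' \<in> EE n)" by (auto simp: EE_def)
qed

lemma dep_ind1: assumes "0 < n" shows "depends_on_first n (\<lambda>\<omega>. indicator (EE n) \<omega> * (1::ennreal))"
  unfolding depends_on_first_def
proof (intro allI impI)
  fix \<omega> \<omega>' :: "nat \<Rightarrow> bool \<times> real" assume "\<forall>j<n. \<omega> j = \<omega>' j"
  then have "(\<omega> \<in> EE n) = (\<omega>' \<in> EE n)" using dep_EE[OF assms] unfolding depends_on_first_def by blast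
  then show "indicator (EE n) \<omega> * (1::ennreal) = indicator (EE n) \<omega>' * 1" by (simp add: indicator_def)
qed

lemma dep_indY: assumes "0 < n"
  shows "depends_on_first n (\<lambda>\<omega>. indicator (EE n) \<omega> * (indicator {\<omega>. factory_output \<tau> \<gamma> \<omega>} \<omega> :: ennreal))"
proof -
  have eq: "indicator (EE n) \<omega> * (indicator {\<omega>. factory_output \<tau> \<gamma> \<omega>} \<omega> :: ennreal)
      = (if \<omega> \<in> EE n \<and> \<gamma> n \<omega> then 1 else 0)" for \<omega>
  proof (cases "\<omega> \<in> EE n")
    case True
    then have "\<omega> \<in> TT" using EE_TT[OF assms] by auto
    then have "stop_time \<tau> \<omega> = n" using stop_E[OF _ assms] True by blast
    then show ?thesis using True by (simp add: factory_output_def indicator_def)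
  qed simp
  show ?thesis unfolding eq using dep_EE[OF assms] gdp[of n] unfolding depends_on_first_def
    by (metis (no_types, lifting))
qed

lemma change_stop_AE:
  assumes p: "0 < p" "p < 1" and q: "0 \<le> q" "q \<le> 1" and g: "g \<in> borel_measurable event_space"
    and gd: "\<And>n. 0 < n \<Longrightarrow> depends_on_first n (\<lambda>\<omega>. indicator (EE n) \<omega> * g \<omega>)"
    and AEp: "AE \<omega> in seq_space p. \<exists>i>0. \<tau> i \<omega>" and AEq: "AE \<omega> in seq_space q. \<exists>i>0. \<tau> i \<omega>"
  shows "(\<integral>\<^sup>+\<omega>. g \<omega> \<partial>seq_space q) = (\<integral>\<^sup>+\<omega>. ennreal (lam p q \<omega>) * g \<omega> \<partial>seq_space p)"
proof -
  have "(\<integral>\<^sup>+\<omega>. g \<omega> \<partial>seq_space q) = (\<integral>\<^sup>+\<omega>. indicator TT \<omega> * g \<omega> \<partial>seq_space q)"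
    by (rule nn_integral_cong_AE) (use AEq in \<open>auto simp: TT_def\<close>)
  also have "\<dots> = (\<integral>\<^sup>+\<omega>. indicator TT \<omega> * (ennreal (lam p q \<omega>) * g \<omega>) \<partial>seq_space p)"
    by (rule change_stop[OF p q g gd])
  also have "\<dots> = (\<integral>\<^sup>+\<omega>. ennreal (lam p q \<omega>) * g \<omega> \<partial>seq_space p)"
    by (rule nn_integral_cong_AE) (use AEp in \<open>auto simp: TT_def\<close>)
  finally show ?thesis .
qed

lemma lam_nonneg: "0 < p \<Longrightarrow> p < 1 \<Longrightarrow> 0 \<le> q \<Longrightarrow> q \<le> 1 \<Longrightarrow> 0 \<le> lam p q \<omega>"
  unfolding lam_def by (intro prod_nonneg rr_nonneg) auto

lemma lam_facts:
  assumes p: "0 < p" "p < 1" and q: "0 \<le> q" "q \<le> 1"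
    and AEp: "AE \<omega> in seq_space p. \<exists>i>0. \<tau> i \<omega>" and AEq: "AE \<omega> in seq_space q. \<exists>i>0. \<tau> i \<omega>"
  shows "integrable (seq_space p) (lam p q)" "integral\<^sup>L (seq_space p) (lam p q) = 1"
    "integrable (seq_space p) (\<lambda>\<omega>. indicator {\<omega>. factory_output \<tau> \<gamma> \<omega>} \<omega> * lam p q \<omega>)"
    "integral\<^sup>L (seq_space p) (\<lambda>\<omega>. indicator {\<omega>. factory_output \<tau> \<gamma> \<omega>} \<omega> * lam p q \<omega>)
       = measure (seq_space q) {\<omega> \<in> space (seq_space q). factory_output \<tau> \<gamma> \<omega>}"
proof -
  interpret Q: prob_space "seq_space q" by (rule seq_prob)
  have lm: "lam p q \<in> borel_measurable (seq_space p)" using lam_meas meas_from_ev by blast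
  have Ym: "{\<omega>. factory_output \<tau> \<gamma> \<omega>} \<in> sets event_space"
  proof -
    have "{\<omega>. factory_output \<tau> \<gamma> \<omega>} = {\<omega> \<in> space event_space. factory_output \<tau> \<gamma> \<omega>}"
      by (simp add: space_ev)
    also have "\<dots> \<in> sets event_space" using Y_meas by measurable
    finally show ?thesis .
  qed
  have "(\<integral>\<^sup>+\<omega>. ennreal (lam p q \<omega>) * 1 \<partial>seq_space p) = (\<integral>\<^sup>+\<omega>. 1 \<partial>seq_space q)"
    by (rule change_stop_AE[OF p q _ dep_ind1 AEp AEq, symmetric]) simp_all
  also have "\<dots> = 1" using Q.emeasure_space_1 by simp
  finally have e1: "(\<integral>\<^sup>+\<omega>. ennreal (lam p q \<omega>) \<partial>seq_space p) = ennreal 1" by simp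
  have b1: "integrable (seq_space p) (lam p q) \<and> integral\<^sup>L (seq_space p) (lam p q) = 1"
    by (rule nn_integral_eq_integrable[OF lm _ _, THEN iffD1]) (use e1 lam_nonneg p q in auto)
  then show "integrable (seq_space p) (lam p q)" "integral\<^sup>L (seq_space p) (lam p q) = 1" by auto
  have "(\<integral>\<^sup>+\<omega>. ennreal (lam p q \<omega>) * indicator {\<omega>. factory_output \<tau> \<gamma> \<omega>} \<omega> \<partial>seq_space p)
      = (\<integral>\<^sup>+\<omega>. indicator {\<omega>. factory_output \<tau> \<gamma> \<omega>} \<omega> \<partial>seq_space q)"
    by (rule change_stop_AE[OF p q _ dep_indY AEp AEq, symmetric]) (use Ym in simp_all)
  also have "\<dots> = emeasure (seq_space q) {\<omega>. factory_output \<tau> \<gamma> \<omega>}"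
    using Ym sets_seq[of q] by simp
  also have "\<dots> = ennreal (measure (seq_space q) {\<omega> \<in> space (seq_space q). factory_output \<tau> \<gamma> \<omega>})"
    by (simp add: Q.emeasure_eq_measure space_seq)
  finally have e2': "(\<integral>\<^sup>+\<omega>. ennreal (lam p q \<omega>) * indicator {\<omega>. factory_output \<tau> \<gamma> \<omega>} \<omega> \<partial>seq_space p)
       = ennreal (measure (seq_space q) {\<omega> \<in> space (seq_space q). factory_output \<tau> \<gamma> \<omega>})" .
  have "(\<integral>\<^sup>+\<omega>. ennreal (indicator {\<omega>. factory_output \<tau> \<gamma> \<omega>} \<omega> * lam p q \<omega>) \<partial>seq_space p)
     = (\<integral>\<^sup>+\<omega>. ennreal (lam p q \<omega>) * indicator {\<omega>. factory_output \<tau> \<gamma> \<omega>} \<omega> \<partial>seq_space p)"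
    by (intro nn_integral_cong) (simp add: indicator_def)
  with e2' have e2: "(\<integral>\<^sup>+\<omega>. ennreal (indicator {\<omega>. factory_output \<tau> \<gamma> \<omega>} \<omega> * lam p q \<omega>) \<partial>seq_space p)
       = ennreal (measure (seq_space q) {\<omega> \<in> space (seq_space q). factory_output \<tau> \<gamma> \<omega>})" by simp
  have lm2: "(\<lambda>\<omega>. indicator {\<omega>. factory_output \<tau> \<gamma> \<omega>} \<omega> * lam p q \<omega>) \<in> borel_measurable (seq_space p)"
    using Ym sets_seq[of p] lm by measurable
  have b2: "integrable (seq_space p) (\<lambda>\<omega>. indicator {\<omega>. factory_output \<tau> \<gamma> \<omega>} \<omega> * lam p q \<omega>) \<and>
     integral\<^sup>L (seq_space p) (\<lambda>\<omega>. indicator {\<omega>. factory_output \<tau> \<gamma> \<omega>} \<omega> * lam p q \<omega>)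
       = measure (seq_space q) {\<omega> \<in> space (seq_space q). factory_output \<tau> \<gamma> \<omega>}"
    by (rule nn_integral_eq_integrable[OF lm2 _ _, THEN iffD1]) (use e2 lam_nonneg p q in auto)
  then show "integrable (seq_space p) (\<lambda>\<omega>. indicator {\<omega>. factory_output \<tau> \<gamma> \<omega>} \<omega> * lam p q \<omega>)"
    "integral\<^sup>L (seq_space p) (\<lambda>\<omega>. indicator {\<omega>. factory_output \<tau> \<gamma> \<omega>} \<omega> * lam p q \<omega>)
       = measure (seq_space q) {\<omega> \<in> space (seq_space q). factory_output \<tau> \<gamma> \<omega>}" by auto
qed


lemma key_ineq:
  fixes p q fp fq a s \<delta> q' :: real
  assumes p: "0 < p" "p < 1" and q: "p < q" "q \<le> 1"
  assumes \<delta>_def: "\<delta> = (q - p)^2 / (p * (1 - p))"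
  assumes q'_def: "q' = q^2 / (p * (1 + \<delta>))"
  assumes q'1: "0 \<le> q'" "q' \<le> 1"
    and AEp: "AE \<omega> in seq_space p. \<exists>i>0. \<tau> i \<omega>" and AEq: "AE \<omega> in seq_space q. \<exists>i>0. \<tau> i \<omega>"
    and AEq': "AE \<omega> in seq_space q'. \<exists>i>0. \<tau> i \<omega>"
    and Yp: "measure (seq_space p) {\<omega> \<in> space (seq_space p). factory_output \<tau> \<gamma> \<omega>} = fp"
    and Yq: "measure (seq_space q) {\<omega> \<in> space (seq_space q). factory_output \<tau> \<gamma> \<omega>} = fq"
    and iphi: "integrable (seq_space p) (\<lambda>\<omega>. (\<Sum>i<stop_time \<tau> \<omega>. (1+\<delta>)^i) * lam p q' \<omega>)"
    and a: "0 < a" and s: "s = 1 \<or> s = -1"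
  shows "2 * s * ((fq - fp) / (q - p)) \<le> a * prob_space.variance (seq_space p) (\<lambda>\<omega>. of_bool (factory_output \<tau> \<gamma> \<omega>) :: real)
          + integral\<^sup>L (seq_space p) (\<lambda>\<omega>. (\<Sum>i<stop_time \<tau> \<omega>. (1+\<delta>)^i) * lam p q' \<omega>) / (a * (p * (1 - p)))"
proof -
  interpret P: prob_space "seq_space p" by (rule seq_prob)
  define X where "X = (\<lambda>\<omega>. of_bool (factory_output \<tau> \<gamma> \<omega>) :: real)"
  define L where "L = lam p q"
  define L' where "L' = lam p q'"
  define \<phi> where "\<phi> = (\<lambda>\<omega>. (\<Sum>i<stop_time \<tau> \<omega>. (1+\<delta>)^i) * lam p q' \<omega>)"
  define h where "h = q - p"
  have h: "0 < h" using q by (simp add: h_def)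
  have q01: "0 \<le> q" "q \<le> 1" using p q by auto
  note F = lam_facts[OF p q01 AEp AEq]
  note F' = lam_facts[OF p q'1 AEp AEq']
  have Li: "integrable (seq_space p) L" "integral\<^sup>L (seq_space p) L = 1" using F by (simp_all add: L_def)
  have L'i: "integrable (seq_space p) L'" "integral\<^sup>L (seq_space p) L' = 1" using F' by (simp_all add: L'_def)
  have XLeq: "(\<lambda>\<omega>. indicator {\<omega>. factory_output \<tau> \<gamma> \<omega>} \<omega> * lam p q \<omega>) = (\<lambda>\<omega>. X \<omega> * L \<omega>)"
    by (auto simp: X_def L_def indicator_def)
  have XLi: "integrable (seq_space p) (\<lambda>\<omega>. X \<omega> * L \<omega>)" "integral\<^sup>L (seq_space p) (\<lambda>\<omega>. X \<omega> * L \<omega>) = fq"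
    using F(3,4) Yq unfolding XLeq by simp_all
  have Yp': "(\<lambda>\<omega>. factory_output \<tau> \<gamma> \<omega>) \<in> seq_space p \<rightarrow>\<^sub>M count_space UNIV"
    using Y_meas meas_from_ev by blast
  have Ym: "{\<omega> \<in> space (seq_space p). factory_output \<tau> \<gamma> \<omega>} \<in> sets (seq_space p)"
    using Yp' by measurable
  have Xm: "X \<in> borel_measurable (seq_space p)"
    using Yp' unfolding X_def by (rule measurable_compose) simp
  have Xi: "integrable (seq_space p) X"
    by (rule P.integrable_const_bound[where B=1]) (use Xm in \<open>auto simp: X_def\<close>)
  have XI: "X = indicator {\<omega> \<in> space (seq_space p). factory_output \<tau> \<gamma> \<omega>}"
    by (auto simp: X_def indicator_def space_seq)
  have EX: "integral\<^sup>L (seq_space p) X = fp"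
    unfolding XI using Yp Ym by simp
  have ic: "integrable (seq_space p) (\<lambda>\<omega>. c)" for c :: real by simp
  have X2i: "integrable (seq_space p) (\<lambda>\<omega>. (X \<omega> - fp)^2)"
  proof -
    have bb: "(1 - fp)^2 \<le> (1+\<bar>fp\<bar>)^2" "fp^2 \<le> (1+\<bar>fp\<bar>)^2"
      by (simp_all only: abs_le_square_iff[symmetric])
    show ?thesis
      by (rule P.integrable_const_bound[where B="(1 + \<bar>fp\<bar>)^2"]) (use Xm bb in \<open>auto simp: X_def\<close>)
  qed
  have d0: "0 \<le> \<delta>" using p by (simp add: \<delta>_def)
  have sq: "(rr p q z)^2 = (1+\<delta>) * rr p q' z" for z
    unfolding q'_def \<delta>_def using sq_rr[OF p] by simp
  have ident: "(L \<omega> - 1)^2 = \<delta> * \<phi> \<omega> + L' \<omega> - 2 * L \<omega> + 1" for \<omega>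
  proof -
    define n where "n = stop_time \<tau> \<omega>"
    have "(L \<omega>)^2 = (\<Prod>j<n. (rr p q (\<omega> j))^2)"
      by (simp add: L_def lam_def n_def prod_power_distrib)
    also have "\<dots> = (\<Prod>j<n. (1+\<delta>) * rr p q' (\<omega> j))" by (simp add: sq)
    also have "\<dots> = (1+\<delta>)^n * L' \<omega>" by (simp add: prod.distrib L'_def lam_def n_def)
    also have "(1+\<delta>)^n = 1 + \<delta> * (\<Sum>i<n. (1+\<delta>)^i)"
      using one_diff_power_eq[of "1+\<delta>" n] by (simp add: algebra_simps)
    finally have "(L \<omega>)^2 = L' \<omega> + \<delta> * \<phi> \<omega>" by (simp add: \<phi>_def n_def L'_def algebra_simps)
    then show ?thesis by (simp add: power2_eq_square algebra_simps)
  qed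
  have Lsq_eq: "(\<lambda>\<omega>. (L \<omega> - 1)^2) = (\<lambda>\<omega>. ((\<delta> * \<phi> \<omega> + L' \<omega>) - 2 * L \<omega>) + 1)"
    by (rule ext) (simp only: ident)
  have phii: "integrable (seq_space p) \<phi>" using iphi by (simp add: \<phi>_def)
  have Lsq_i: "integrable (seq_space p) (\<lambda>\<omega>. (L \<omega> - 1)^2)"
    unfolding Lsq_eq by (intro Bochner_Integration.integrable_add Bochner_Integration.integrable_diff ic
       integrable_mult_right phii Li L'i)
  have Lsq_int: "integral\<^sup>L (seq_space p) (\<lambda>\<omega>. (L \<omega> - 1)^2) = \<delta> * integral\<^sup>L (seq_space p) \<phi>"
  proof -
    have "integral\<^sup>L (seq_space p) (\<lambda>\<omega>. (L \<omega> - 1)^2)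
        = ((\<delta> * integral\<^sup>L (seq_space p) \<phi> + integral\<^sup>L (seq_space p) L') - 2 * integral\<^sup>L (seq_space p) L) + 1"
      unfolding Lsq_eq
      by (subst Bochner_Integration.integral_add, (intro Bochner_Integration.integrable_add Bochner_Integration.integrable_diff ic
       integrable_mult_right phii Li L'i)+,
          subst Bochner_Integration.integral_diff, (intro Bochner_Integration.integrable_add
       integrable_mult_right phii Li L'i)+,
          subst Bochner_Integration.integral_add, (intro integrable_mult_right phii Li L'i)+) (simp add: P.prob_space)
    then show ?thesis using Li L'i by simp
  qed
  define c where "c = a * h"
  have c: "0 < c" using a h by (simp add: c_def)
  have s2: "s^2 = 1" using s by auto
  have pw: "2 * ((s * (X \<omega> - fp)) * (L \<omega> - 1)) \<le> c * (X \<omega> - fp)^2 + (L \<omega> - 1)^2 / c" for \<omega>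
    using amgm[OF c, of "s * (X \<omega> - fp)" "L \<omega> - 1"] s2 by (simp add: power_mult_distrib)
  have lhs_eq: "(\<lambda>\<omega>. 2 * ((s * (X \<omega> - fp)) * (L \<omega> - 1))) = (\<lambda>\<omega>. (2 * s) * ((X \<omega> * L \<omega> - fp * L \<omega>) - (X \<omega> - fp)))"
    by (simp add: algebra_simps)
  have lhs_i: "integrable (seq_space p) (\<lambda>\<omega>. 2 * ((s * (X \<omega> - fp)) * (L \<omega> - 1)))"
    unfolding lhs_eq by (intro integrable_mult_right Bochner_Integration.integrable_diff XLi Li Xi ic)
  have lhs_int: "integral\<^sup>L (seq_space p) (\<lambda>\<omega>. 2 * ((s * (X \<omega> - fp)) * (L \<omega> - 1))) = 2 * s * (fq - fp)"
  proof -
    have "integral\<^sup>L (seq_space p) (\<lambda>\<omega>. (X \<omega> * L \<omega> - fp * L \<omega>) - (X \<omega> - fp))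
       = (integral\<^sup>L (seq_space p) (\<lambda>\<omega>. X \<omega> * L \<omega>) - fp * integral\<^sup>L (seq_space p) L) - (integral\<^sup>L (seq_space p) X - fp)"
      by (subst Bochner_Integration.integral_diff, (intro integrable_mult_right Bochner_Integration.integrable_diff XLi Li Xi ic)+,
          subst Bochner_Integration.integral_diff, (intro integrable_mult_right XLi Li)+,
          subst Bochner_Integration.integral_diff, (intro Xi ic)+) (simp add: P.prob_space)
    also have "\<dots> = fq - fp" using XLi Li EX by simp
    finally show ?thesis unfolding lhs_eq by simp
  qed
  have rhs_i: "integrable (seq_space p) (\<lambda>\<omega>. c * (X \<omega> - fp)^2 + (L \<omega> - 1)^2 / c)"
    by (intro Bochner_Integration.integrable_add integrable_mult_right integrable_divide X2i Lsq_i)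
  have rhs_int: "integral\<^sup>L (seq_space p) (\<lambda>\<omega>. c * (X \<omega> - fp)^2 + (L \<omega> - 1)^2 / c)
      = c * integral\<^sup>L (seq_space p) (\<lambda>\<omega>. (X \<omega> - fp)^2) + \<delta> * integral\<^sup>L (seq_space p) \<phi> / c"
    using X2i Lsq_i Lsq_int by simp
  define VV where "VV = integral\<^sup>L (seq_space p) (\<lambda>\<omega>. (X \<omega> - fp)^2)"
  define II where "II = integral\<^sup>L (seq_space p) \<phi>"
  have ineq0: "2 * s * (fq - fp) \<le> c * VV + \<delta> * II / c"
    using integral_mono[OF lhs_i rhs_i pw] lhs_int rhs_int by (simp add: VV_def II_def)
  have dh: "\<delta> = h^2 / (p * (1 - p))" by (simp add: \<delta>_def h_def)
  have e: "\<delta> * II / c = h * (II / (a * (p * (1 - p))))"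
    unfolding dh c_def using h a p by (simp add: divide_simps power2_eq_square)
  have ineq: "2 * s * (fq - fp) \<le> h * (a * VV + II / (a * (p * (1 - p))))"
    using ineq0 unfolding e by (simp add: c_def distrib_left mult.assoc mult.left_commute[of a h])
  have V: "prob_space.variance (seq_space p) (\<lambda>\<omega>. of_bool (factory_output \<tau> \<gamma> \<omega>) :: real)
      = integral\<^sup>L (seq_space p) (\<lambda>\<omega>. (X \<omega> - fp)^2)"
    using EX by (simp add: X_def)
  have "2 * s * ((fq - fp) / h) \<le> a * VV + II / (a * (p * (1 - p)))"
    using ineq h by (simp add: pos_divide_le_eq mult.commute mult.left_commute)
  then show ?thesis
    unfolding V \<phi>_def[symmetric] by (simp add: h_def VV_def II_def)
qed


lemma main:
  fixes S :: "real set" and f :: "real \<Rightarrow> real" and p f' A \<beta> :: real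
  assumes S: "open S" "S \<subseteq> {0<..<1}" "p \<in> S"
    and AE: "\<And>q. q \<in> S \<Longrightarrow> AE \<omega> in seq_space q. \<exists>i>0. \<tau> i \<omega>"
    and fY: "\<And>q. q \<in> S \<Longrightarrow> measure (seq_space q) {\<omega> \<in> space (seq_space q). factory_output \<tau> \<gamma> \<omega>} = f q"
    and fast: "\<And>n. measure (seq_space p) {\<omega> \<in> space (seq_space p). stop_time \<tau> \<omega> > n} \<le> A * \<beta> ^ n"
    and A: "0 < A" and \<beta>: "\<beta> < 1"
    and der: "(f has_real_derivative f') (at p)"
  shows "f'^2 * p * (1-p) / prob_space.expectation (seq_space p) (\<lambda>\<omega>. real (stop_time \<tau> \<omega>))
     \<le> prob_space.variance (seq_space p) (\<lambda>\<omega>. of_bool (factory_output \<tau> \<gamma> \<omega>) :: real)"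
proof -
  interpret P: prob_space "seq_space p" by (rule seq_prob)
  have p: "0 < p" "p < 1" using S by auto
  have \<beta>0: "0 \<le> \<beta>"
  proof -
    have "0 \<le> measure (seq_space p) {\<omega> \<in> space (seq_space p). stop_time \<tau> \<omega> > 1}" by simp
    also have "\<dots> \<le> A * \<beta>^1" by (rule fast)
    finally show ?thesis using A by (simp add: zero_le_mult_iff)
  qed
  define b where "b = max \<beta> (1/2)"
  define \<theta> where "\<theta> = 2 / (1 + b)"
  define t where "t = (\<theta> - 1) / 8"
  have b: "\<beta> \<le> b" "1/2 \<le> b" "b < 1" using \<beta> by (auto simp: b_def)
  have \<theta>1: "1 < \<theta>" "\<theta> * b < 1" "\<theta> \<le> 4/3" using b by (auto simp: \<theta>_def field_simps)
  have t: "0 < t" "t \<le> 1" using \<theta>1 by (auto simp: t_def)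
  have t\<theta>: "(1+t)*(1+3*t) \<le> \<theta>"
  proof -
    have "t * t \<le> 1 * t" using t by (intro mult_right_mono) auto
    moreover have "(1+t)*(1+3*t) = 1 + 4*t + 3*(t*t)" by (simp add: algebra_simps)
    moreover have "\<theta> = 1 + 8*t" by (simp add: t_def field_simps)
    ultimately show ?thesis using t by linarith
  qed
  have Nm: "(\<lambda>\<omega>. stop_time \<tau> \<omega>) \<in> seq_space p \<rightarrow>\<^sub>M count_space UNIV" using stop_meas meas_from_ev by blast
  have Wint0: "integrable (seq_space p) (\<lambda>\<omega>. \<theta> ^ stop_time \<tau> \<omega>)"
    by (rule geom_int[OF seq_prob Nm fast A b(1) _ \<beta>0 _ \<theta>1(2)]) (use b \<theta>1 in auto)
  define W where "W = (\<lambda>\<omega>. \<theta> ^ stop_time \<tau> \<omega> / t)"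
  have Wi: "integrable (seq_space p) W" unfolding W_def using Wint0 by simp
  obtain e where e: "e > 0" "ball p e \<subseteq> S" using S open_contains_ball by blast
  define d where "d = min (e/2) (p*t)"
  have d: "0 < d" "d < e" "d \<le> p*t" using e p t by (auto simp: d_def)
  define q where "q k = p + d / real (Suc k)" for k
  have dk: "d / real (Suc k) \<le> d" "0 < d / real (Suc k)" for k using d by (auto simp: divide_le_eq)
  have qk: "p < q k" "q k \<le> p + d" for k using dk[of k] by (auto simp: q_def)
  have qS: "q k \<in> S" for k
  proof -
    have "dist p (q k) < e" using qk[of k] d by (simp add: dist_real_def)
    then show ?thesis using e by auto
  qed
  have q1: "q k \<le> 1" for k using qS[of k] S by auto
  have qt: "q k \<le> p * (1 + t)" for k using qk[of k] d by (simp add: algebra_simps)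
  define \<delta> where "\<delta> k = (q k - p)^2/(p*(1-p))" for k
  define q' where "q' k = (q k)^2/(p*(1+\<delta> k))" for k
  define \<phi> where "\<phi> k \<omega> = (\<Sum>i<stop_time \<tau> \<omega>. (1 + \<delta> k)^i) * lam p (q' k) \<omega>" for k \<omega>
  have qlim: "q \<longlonglongrightarrow> p"
  proof -
    have "(\<lambda>k. d / real (Suc k)) \<longlonglongrightarrow> 0" using LIMSEQ_Suc[OF lim_const_over_n[of d]] by simp
    then have "(\<lambda>k. p + d / real (Suc k)) \<longlonglongrightarrow> p + 0" by (intro tendsto_intros)
    then show ?thesis by (simp add: q_def[abs_def])
  qed
  have \<delta>lim: "\<delta> \<longlonglongrightarrow> 0"
  proof -
    have "(\<lambda>k. (q k - p)^2/(p*(1-p))) \<longlonglongrightarrow> (p - p)^2/(p*(1-p))" using p by (intro tendsto_intros qlim) auto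
    then show ?thesis by (simp add: \<delta>_def[abs_def])
  qed
  have q'lim: "q' \<longlonglongrightarrow> p"
  proof -
    have "(\<lambda>k. (q k)^2/(p*(1+\<delta> k))) \<longlonglongrightarrow> p^2/(p*(1+0))" using p by (intro tendsto_intros qlim \<delta>lim) auto
    then show ?thesis using p by (simp add: q'_def[abs_def] power2_eq_square)
  qed
  have evS: "eventually (\<lambda>k. q' k \<in> S) sequentially" by (rule topological_tendstoD[OF q'lim S(1) S(3)])
  have Nreal_m: "(\<lambda>\<omega>. real (stop_time \<tau> \<omega>)) \<in> borel_measurable (seq_space p)"
    using Nm by (rule measurable_compose) simp
  have \<phi>m: "\<phi> k \<in> borel_measurable (seq_space p)" for k
  proof -
    have "(\<lambda>\<omega>. (\<lambda>n \<omega>. (\<Sum>i<n. (1 + \<delta> k)^i)) (stop_time \<tau> \<omega>) \<omega>) \<in> borel_measurable (seq_space p)"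
      by (rule measurable_compose_countable'[where I=UNIV, OF _ Nm]) simp_all
    moreover have "lam p (q' k) \<in> borel_measurable (seq_space p)" using lam_meas meas_from_ev by blast
    ultimately show ?thesis unfolding \<phi>_def[abs_def] by simp
  qed
  have bound: "norm (\<phi> k \<omega>) \<le> W \<omega>" for k \<omega>
  proof -
    note pb = phi_bound[OF p less_imp_le[OF qk(1)] q1 qt t \<delta>_def q'_def, where n="stop_time \<tau> \<omega>" and \<omega>=\<omega>]
    have "\<phi> k \<omega> \<le> ((1+t)*(1+3*t))^(stop_time \<tau> \<omega>) / t" using pb(2) by (simp add: \<phi>_def lam_def)
    also have "\<dots> \<le> W \<omega>" unfolding W_def using t t\<theta> by (intro divide_right_mono power_mono) auto
    finally show ?thesis using pb(1) by (simp add: \<phi>_def lam_def)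
  qed
  have rr_lim: "(\<lambda>k. rr p (q' k) z) \<longlonglongrightarrow> 1" for z
  proof (cases "fst z")
    case True
    have "(\<lambda>k. q' k / p) \<longlonglongrightarrow> p / p" using p by (intro tendsto_intros q'lim) auto
    then show ?thesis using True p by (simp add: rr_def)
  next
    case False
    have "(\<lambda>k. (1 - q' k) / (1 - p)) \<longlonglongrightarrow> (1 - p) / (1 - p)" using p by (intro tendsto_intros q'lim) auto
    then show ?thesis using False p by (simp add: rr_def)
  qed
  have lim: "(\<lambda>k. \<phi> k \<omega>) \<longlonglongrightarrow> real (stop_time \<tau> \<omega>)" for \<omega>
  proof -
    have "(\<lambda>k. (\<Sum>i<stop_time \<tau> \<omega>. (1 + \<delta> k)^i) * (\<Prod>j<stop_time \<tau> \<omega>. rr p (q' k) (\<omega> j)))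
       \<longlonglongrightarrow> (\<Sum>i<stop_time \<tau> \<omega>. (1 + 0)^i) * (\<Prod>j<stop_time \<tau> \<omega>. (1::real))"
      by (intro tendsto_intros \<delta>lim rr_lim)
    then show ?thesis by (simp add: \<phi>_def lam_def)
  qed
  note dct_prem = Nreal_m \<phi>m Wi AE_I2[OF lim] AE_I2[OF bound]
  have EN_lim: "(\<lambda>k. integral\<^sup>L (seq_space p) (\<phi> k)) \<longlonglongrightarrow> P.expectation (\<lambda>\<omega>. real (stop_time \<tau> \<omega>))"
    by (rule integral_dominated_convergence[OF dct_prem])
  have \<phi>i: "integrable (seq_space p) (\<phi> k)" for k
    by (rule integrable_dominated_convergence2[OF dct_prem])
  have Ni: "integrable (seq_space p) (\<lambda>\<omega>. real (stop_time \<tau> \<omega>))"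
    by (rule integrable_dominated_convergence[OF dct_prem])
  define V where "V = prob_space.variance (seq_space p) (\<lambda>\<omega>. of_bool (factory_output \<tau> \<gamma> \<omega>) :: real)"
  define EN where "EN = P.expectation (\<lambda>\<omega>. real (stop_time \<tau> \<omega>))"
  have D: "((\<lambda>y. (f y - f p) / (y - p)) \<longlongrightarrow> f') (at p)"
    using der by (simp add: has_field_derivative_iff)
  have qf: "filterlim q (at p) sequentially"
    using qlim qk by (auto simp: filterlim_at intro!: always_eventually less_imp_neq[symmetric])
  have Dq: "(\<lambda>k. (f (q k) - f p) / (q k - p)) \<longlonglongrightarrow> f'"
    using filterlim_compose[OF D qf] .
  have main_s: "2 * s * f' \<le> a * V + EN / (a * (p * (1 - p)))" if a: "0 < a" and s: "s = 1 \<or> s = -1" for a s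
  proof (rule tendsto_le[OF trivial_limit_sequentially])
    show "(\<lambda>k. a * V + integral\<^sup>L (seq_space p) (\<phi> k) / (a * (p * (1 - p)))) \<longlonglongrightarrow> a * V + EN / (a * (p * (1 - p)))"
      unfolding EN_def using a p by (intro tendsto_intros EN_lim) auto
    show "(\<lambda>k. 2 * s * ((f (q k) - f p) / (q k - p))) \<longlonglongrightarrow> 2 * s * f'"
      by (intro tendsto_intros Dq)
    show "\<forall>\<^sub>F k in sequentially. 2 * s * ((f (q k) - f p) / (q k - p)) \<le> a * V + integral\<^sup>L (seq_space p) (\<phi> k) / (a * (p * (1 - p)))"
    proof (rule eventually_mono[OF evS])
      fix k assume q'S: "q' k \<in> S"
      have q'01: "0 \<le> q' k" "q' k \<le> 1" using q'S S by auto
      have iphi: "integrable (seq_space p) (\<lambda>\<omega>. (\<Sum>i<stop_time \<tau> \<omega>. (1 + \<delta> k)^i) * lam p (q' k) \<omega>)"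
        using \<phi>i[of k] by (simp add: \<phi>_def[abs_def])
      have "2 * s * ((f (q k) - f p) / (q k - p)) \<le> a * V
          + integral\<^sup>L (seq_space p) (\<lambda>\<omega>. (\<Sum>i<stop_time \<tau> \<omega>. (1 + \<delta> k)^i) * lam p (q' k) \<omega>) / (a * (p * (1 - p)))"
        unfolding V_def
        by (rule key_ineq[OF p qk(1) q1 \<delta>_def q'_def q'01 AE[OF S(3)] AE[OF qS] AE[OF q'S]
              fY[OF S(3)] fY[OF qS] iphi a s])
      then show "2 * s * ((f (q k) - f p) / (q k - p)) \<le> a * V + integral\<^sup>L (seq_space p) (\<phi> k) / (a * (p * (1 - p)))"
        by (simp add: \<phi>_def[abs_def])
    qed
  qed
  have EN1: "1 \<le> EN"
  proof -
    have "integral\<^sup>L (seq_space p) (\<lambda>\<omega>. 1) \<le> EN"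
      unfolding EN_def
    proof (rule integral_mono_AE[OF _ Ni])
      show "AE \<omega> in seq_space p. 1 \<le> real (stop_time \<tau> \<omega>)"
        using AE[OF S(3)]
      proof (rule AE_mp, intro AE_I2 impI)
        fix \<omega> assume "\<exists>i>0. \<tau> i \<omega>"
        then have "\<omega> \<in> TT" by (simp add: TT_def)
        then show "1 \<le> real (stop_time \<tau> \<omega>)" using stop_pos by (simp add: Suc_le_eq)
      qed
    qed simp
    then show ?thesis by (simp add: P.prob_space)
  qed
  have V0: "0 \<le> V" unfolding V_def by (intro Bochner_Integration.integral_nonneg) simp
  have I0: "0 < EN / (p * (1 - p))" using EN1 p by simp
  have H: "2 * \<bar>f'\<bar> \<le> a * V + EN / (p * (1 - p)) / a" if "0 < a" for a
  proof -
    have "2 * 1 * f' \<le> a * V + EN / (a * (p * (1 - p)))" "2 * (-1) * f' \<le> a * V + EN / (a * (p * (1 - p)))"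
      using main_s[OF that, of 1] main_s[OF that, of "-1"] by simp_all
    then show ?thesis by (simp add: abs_if mult.commute)
  qed
  have "f'^2 \<le> EN / (p * (1 - p)) * V" by (rule final_alg[OF H V0 I0])
  then have "f'^2 * (p * (1 - p)) \<le> EN * V" using p by (simp add: field_simps)
  then have "f'^2 * (p * (1 - p)) / EN \<le> V" using EN1 by (simp add: divide_le_eq mult.commute)
  then show ?thesis by (simp add: V_def EN_def mult.assoc)
qed

end


theorem lemma2:
  fixes S :: "real set" and f :: "real \<Rightarrow> real"
    and \<tau> \<gamma> :: "nat \<Rightarrow> (nat \<Rightarrow> bool \<times> real) \<Rightarrow> bool"
  assumes "open S" and "S \<subseteq> {0<..<1}"
    and "\<forall>p\<in>S. f p \<in> {0<..<1}"
    and "\<forall>p\<in>S. f differentiable (at p)"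
    and "bernoulli_factory S f \<tau> \<gamma>"
    and "fast_factory S \<tau>"
    and "p \<in> S"
  shows "prob_space.variance (seq_space p) (\<lambda>\<omega>. of_bool (factory_output \<tau> \<gamma> \<omega>) :: real)
           \<ge> (deriv f p)\<^sup>2 * p * (1 - p)
              / prob_space.expectation (seq_space p) (\<lambda>\<omega>. real (stop_time \<tau> \<omega>))"
proof -
  have bf: "bernoulli_factory S f \<tau> \<gamma>" by fact
  have tm: "\<And>i. \<tau> i \<in> event_space \<rightarrow>\<^sub>M count_space UNIV"
    and td: "\<And>i. depends_on_first i (\<tau> i)"
    and gm: "\<And>n. \<gamma> n \<in> event_space \<rightarrow>\<^sub>M count_space UNIV"
    and gd: "\<And>n. depends_on_first n (\<gamma> n)"
    using bf unfolding bernoulli_factory_def by blast+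
  have AE: "\<And>q. q \<in> S \<Longrightarrow> AE \<omega> in seq_space q. \<exists>i>0. \<tau> i \<omega>"
    and fY: "\<And>q. q \<in> S \<Longrightarrow> measure (seq_space q) {\<omega> \<in> space (seq_space q). factory_output \<tau> \<gamma> \<omega>} = f q"
    using bf unfolding bernoulli_factory_def by blast+
  obtain A \<beta> where A: "0 < A" and \<beta>: "\<beta> < 1"
    and fast: "\<And>n. measure (seq_space p) {\<omega> \<in> space (seq_space p). stop_time \<tau> \<omega> > n} \<le> A * \<beta> ^ n"
    using assms(6,7) unfolding fast_factory_def by blast
  have der: "(f has_real_derivative deriv f p) (at p)"
    using assms(4,7) by (simp add: DERIV_deriv_iff_real_differentiable)
  have "(deriv f p)^2 * p * (1-p) / prob_space.expectation (seq_space p) (\<lambda>\<omega>. real (stop_time \<tau> \<omega>))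
     \<le> prob_space.variance (seq_space p) (\<lambda>\<omega>. of_bool (factory_output \<tau> \<gamma> \<omega>) :: real)"
    by (rule main[OF tm td gm gd assms(1,2,7) AE fY fast A \<beta> der])
  then show ?thesis by simp
qed

end
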